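(* Let $(X,\mathbb{F})$ be a non-autonomous system on a compact metric space and let $\Psi$ be a hyperspace admissible with $\mathbb{F}$ such that $\mathcal{F}(X)\subseteq\Psi$, endowed with any admissible hyperspace topology $\Delta$ (of hit-and-miss or hit-and-far-miss type). If the set of periodic points of $(X,\mathbb{F})$ is dense in $X$, then the set of periodic points of $(\Psi,\overline{\mathbb{F}})$ is dense in $(\Psi,\Delta)$.
   Context: $(X,d)$ is a compact metric space, $\mathbb{F}=(f_n)_{n\in\mathbb{N}}$ a sequence of continuous self-maps of $X$, and $\omega_n=f_n\circ f_{n-1}\circ\cdots\circ f_1$. A point $x$ is periodic for $\mathbb{F}$ if there is $n\in\mathbb{N}$ with $\omega_{nk}(x)=x$ for all $k\in\mathbb{N}$. $\mathcal{K}(X)$ denotes the non-empty compact subsets of $X$, $\mathcal{F}(X)$ the non-empty finite subsets. A hyperspace $\Psi\subseteq\mathcal{K}(X)$ is admissible with $\mathbb{F}$ if $\omega_k(A)\in\Psi$ for all $A\in\Psi$, $k\in\mathbb{N}$; the induced system $(\Psi,\overline{\mathbb{F}})$ is given by $\overline{f_n}(A)=f_n(A)$, so $\overline{\omega}_k(A)=\omega_k(A)$, and dynamical notions for it are defined as for $(X,\mathbb{F})$ with $\overline{\omega}_k$ in place of $\omega_k$ (so $A\in\Psi$ is periodic if $\overline{\omega}_{nk}(A)=A$ for all $k$, for some $n$). A hyperspace topology is admissible if $x\mapsto\{x\}$ is continuous; every admissible topology is of hit-and-miss type (subbasic sets $U^-=\{A: A\cap U\neq\emptyset\}$ for $U$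 open and $(E^c)^+=\{A: A\subseteq E^c\}$ for $E$ in a fixed family $\mathcal{C}$ of closed sets) or hit-and-far-miss type (with $(E^c)^{++}=\{A:\exists\varepsilon>0,\ S_\varepsilon(A)\subseteq E^c\}$ instead), and the induced maps are assumed continuous. *)

theory Defs
  imports "HOL-Analysis.Analysis"
begin

(* omega f n = f n o f (n-1) o ... o f 1; the maps are indexed from 1, f 0 is unused *)
fun omega :: "(nat \<Rightarrow> 'a \<Rightarrow> 'a) \<Rightarrow> nat \<Rightarrow> 'a \<Rightarrow> 'a" where
  "omega f 0 = id"
| "omega f (Suc n) = f (Suc n) \<circ> omega f n"

definition periodic_pt :: "(nat \<Rightarrow> 'a \<Rightarrow> 'a) \<Rightarrow> 'a \<Rightarrow> bool" where
  "periodic_pt f x \<longleftrightarrow> (\<exists>n\<ge>1. \<forall>k\<ge>1. omega f (n * k) x = x)"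

definition periodic_set :: "(nat \<Rightarrow> 'a \<Rightarrow> 'a) \<Rightarrow> 'a set \<Rightarrow> bool" where
  "periodic_set f A \<longleftrightarrow> (\<exists>n\<ge>1. \<forall>k\<ge>1. omega f (n * k) ` A = A)"

definition eps_nbhd :: "'a::metric_space set \<Rightarrow> real \<Rightarrow> 'a set \<Rightarrow> 'a set" where
  "eps_nbhd X e A = {y \<in> X. \<exists>a\<in>A. dist a y < e}"

definition hit_miss_top :: "'a::metric_space set \<Rightarrow> 'a set set \<Rightarrow> 'a set topology" where
  "hit_miss_top X C = topology_generated_by
     ({ {A. A \<inter> U \<noteq> {}} | U. openin (top_of_set X) U }
      \<union> { {A. A \<subseteq> X - E} | E. E \<in> C })"

definition hit_far_miss_top :: "'a::metric_space set \<Rightarrow> 'a set set \<Rightarrow> 'a set topology" where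
  "hit_far_miss_top X C = topology_generated_by
     ({ {A. A \<inter> U \<noteq> {}} | U. openin (top_of_set X) U }
      \<union> { {A. \<exists>e>0. eps_nbhd X e A \<subseteq> X - E} | E. E \<in> C })"

end

theory Submission
  imports Defs
begin

definition goodW :: "'a::metric_space set \<Rightarrow> 'a set set \<Rightarrow> bool" where
  "goodW X T \<longleftrightarrow> (\<forall>A. A \<subseteq> X \<and> A \<noteq> {} \<and> A \<in> T \<longrightarrow>
     (\<exists>H E. finite H \<and> (\<forall>U\<in>H. openin (top_of_set X) U \<and> U \<inter> A \<noteq> {}) \<and>
        closedin (top_of_set X) E \<and> A \<inter> E = {} \<and>
        (\<forall>F. finite F \<and> F \<noteq> {} \<and> F \<subseteq> X - E \<and> (\<forall>U\<in>H. F \<inter> U \<noteq> {}) \<longrightarrow> F \<in> T)))"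

lemma goodW_D:
  assumes "goodW X T" "A \<subseteq> X" "A \<noteq> {}" "A \<in> T"
  shows "\<exists>H E. finite H \<and> (\<forall>U\<in>H. openin (top_of_set X) U \<and> U \<inter> A \<noteq> {}) \<and>
        closedin (top_of_set X) E \<and> A \<inter> E = {} \<and>
        (\<forall>F. finite F \<and> F \<noteq> {} \<and> F \<subseteq> X - E \<and> (\<forall>U\<in>H. F \<inter> U \<noteq> {}) \<longrightarrow> F \<in> T)"
  using assms unfolding goodW_def by (elim allE[of _ A] impE) blast+

lemma goodW_E:
  assumes "goodW X T" "A \<subseteq> X" "A \<noteq> {}" "A \<in> T"
  obtains H E where "finite H" "\<forall>U\<in>H. openin (top_of_set X) U \<and> U \<inter> A \<noteq> {}"
      "closedin (top_of_set X) E" "A \<inter> E = {}"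
      "\<forall>F. finite F \<and> F \<noteq> {} \<and> F \<subseteq> X - E \<and> (\<forall>U\<in>H. F \<inter> U \<noteq> {}) \<longrightarrow> F \<in> T"
  apply (insert goodW_D[OF assms]) apply (elim exE conjE) apply (rule that) apply assumption+ done

lemma goodW_gen:
  assumes "generate_topology_on S T" and "\<And>s. s \<in> S \<Longrightarrow> goodW X s"
  shows "goodW X T"
  using assms(1)
proof (induction rule: generate_topology_on.induct)
  case Empty
  then show ?case by (simp add: goodW_def)
next
  case (Int a b)
  show ?case unfolding goodW_def
  proof (intro allI impI)
    fix A assume A: "A \<subseteq> X \<and> A \<noteq> {} \<and> A \<in> a \<inter> b"
    obtain H1 E1 where 1: "finite H1" "\<forall>U\<in>H1. openin (top_of_set X) U \<and> U \<inter> A \<noteq> {}"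
      "closedin (top_of_set X) E1" "A \<inter> E1 = {}"
      "\<forall>F. finite F \<and> F \<noteq> {} \<and> F \<subseteq> X - E1 \<and> (\<forall>U\<in>H1. F \<inter> U \<noteq> {}) \<longrightarrow> F \<in> a"
      using goodW_E[OF Int.IH(1)] A by blast
    obtain H2 E2 where 2: "finite H2" "\<forall>U\<in>H2. openin (top_of_set X) U \<and> U \<inter> A \<noteq> {}"
      "closedin (top_of_set X) E2" "A \<inter> E2 = {}"
      "\<forall>F. finite F \<and> F \<noteq> {} \<and> F \<subseteq> X - E2 \<and> (\<forall>U\<in>H2. F \<inter> U \<noteq> {}) \<longrightarrow> F \<in> b"
      using goodW_E[OF Int.IH(2)] A by blast
    show "\<exists>H E. finite H \<and> (\<forall>U\<in>H. openin (top_of_set X) U \<and> U \<inter> A \<noteq> {}) \<and>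
        closedin (top_of_set X) E \<and> A \<inter> E = {} \<and>
        (\<forall>F. finite F \<and> F \<noteq> {} \<and> F \<subseteq> X - E \<and> (\<forall>U\<in>H. F \<inter> U \<noteq> {}) \<longrightarrow> F \<in> a \<inter> b)"
    proof (intro exI conjI)
      show "finite (H1 \<union> H2)" using 1(1) 2(1) by simp
      show "\<forall>U\<in>H1 \<union> H2. openin (top_of_set X) U \<and> U \<inter> A \<noteq> {}" using 1(2) 2(2) by blast
      show "closedin (top_of_set X) (E1 \<union> E2)" using 1(3) 2(3) by (rule closedin_Un)
      show "A \<inter> (E1 \<union> E2) = {}" using 1(4) 2(4) by blast
      show "\<forall>F. finite F \<and> F \<noteq> {} \<and> F \<subseteq> X - (E1 \<union> E2) \<and> (\<forall>U\<in>H1 \<union> H2. F \<inter> U \<noteq> {}) \<longrightarrow> F \<in> a \<inter> b"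
      proof (intro allI impI)
        fix F assume F: "finite F \<and> F \<noteq> {} \<and> F \<subseteq> X - (E1 \<union> E2) \<and> (\<forall>U\<in>H1 \<union> H2. F \<inter> U \<noteq> {})"
        then have "F \<in> a" using 1(5) by blast
        moreover have "F \<in> b" using F 2(5) by blast
        ultimately show "F \<in> a \<inter> b" by blast
      qed
    qed
  qed
next
  case (UN K)
  show ?case unfolding goodW_def
  proof (intro allI impI)
    fix A assume A: "A \<subseteq> X \<and> A \<noteq> {} \<and> A \<in> \<Union>K"
    then obtain k where k: "k \<in> K" "A \<in> k" by auto
    obtain H1 E1 where 1: "finite H1" "\<forall>U\<in>H1. openin (top_of_set X) U \<and> U \<inter> A \<noteq> {}"
      "closedin (top_of_set X) E1" "A \<inter> E1 = {}"
      "\<forall>F. finite F \<and> F \<noteq> {} \<and> F \<subseteq> X - E1 \<and> (\<forall>U\<in>H1. F \<inter> U \<noteq> {}) \<longrightarrow> F \<in> k"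
      using goodW_E[OF UN.IH[OF k(1)]] A k by blast
    show "\<exists>H E. finite H \<and> (\<forall>U\<in>H. openin (top_of_set X) U \<and> U \<inter> A \<noteq> {}) \<and>
        closedin (top_of_set X) E \<and> A \<inter> E = {} \<and>
        (\<forall>F. finite F \<and> F \<noteq> {} \<and> F \<subseteq> X - E \<and> (\<forall>U\<in>H. F \<inter> U \<noteq> {}) \<longrightarrow> F \<in> \<Union>K)"
    proof (intro exI conjI)
      show "\<forall>F. finite F \<and> F \<noteq> {} \<and> F \<subseteq> X - E1 \<and> (\<forall>U\<in>H1. F \<inter> U \<noteq> {}) \<longrightarrow> F \<in> \<Union>K"
        using 1(5) k(1) by blast
    qed (use 1 in \<open>blast+\<close>)
  qed
next
  case (Basis s)
  then show ?case using assms(2) by blast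
qed

lemma finite_far:
  fixes X :: "'a::metric_space set"
  assumes "finite F" "F \<subseteq> X - E" "closedin (top_of_set X) E"
  shows "\<exists>e>0. eps_nbhd X e F \<subseteq> X - E"
proof -
  have "\<forall>x\<in>F. \<exists>e>0. \<forall>y\<in>X. dist x y < e \<longrightarrow> y \<notin> E"
  proof
    fix x assume x: "x \<in> F"
    have "openin (top_of_set X) (X - E)" using assms(3) by (simp add: openin_diff)
    then obtain e where "e > 0" "\<forall>y\<in>X. dist y x < e \<longrightarrow> y \<in> X - E"
      using x assms(2) unfolding openin_euclidean_subtopology_iff by blast
    then show "\<exists>e>0. \<forall>y\<in>X. dist x y < e \<longrightarrow> y \<notin> E" by (auto simp: dist_commute)
  qed
  then obtain d where d: "\<forall>x\<in>F. d x > 0 \<and> (\<forall>y\<in>X. dist x y < d x \<longrightarrow> y \<notin> E)"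
    by metis
  define e where "e = (if F = {} then 1 else Min (d ` F))"
  have e: "e > 0" using d assms(1) by (auto simp: e_def)
  have "\<forall>x\<in>F. e \<le> d x" using assms(1) by (auto simp: e_def)
  then have "eps_nbhd X e F \<subseteq> X - E" using d unfolding eps_nbhd_def by fastforce
  then show ?thesis using e by blast
qed

lemma periodic_finite:
  assumes "finite F" "\<forall>x\<in>F. periodic_pt f x"
  shows "periodic_set f F"
proof -
  obtain p where p: "\<forall>x\<in>F. p x \<ge> 1 \<and> (\<forall>k\<ge>1. omega f (p x * k) x = x)"
    using assms(2) unfolding periodic_pt_def by metis
  define N where "N = (\<Prod>x\<in>F. p x)"
  have N: "N \<ge> 1" unfolding N_def using p
    by (metis One_nat_def Suc_le_eq prod_pos)
  have "\<forall>k\<ge>1. \<forall>x\<in>F. omega f (N * k) x = x"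
  proof (intro allI impI ballI)
    fix k x assume k: "(k::nat) \<ge> 1" and x: "x \<in> F"
    have "p x dvd N" unfolding N_def using assms(1) x by (simp add: dvd_prodI)
    then obtain m where m: "N = p x * m" by blast
    then have "m \<ge> 1" using N by (cases m) auto
    then have "m * k \<ge> 1" using k by simp
    then show "omega f (N * k) x = x" using p x m by (simp add: mult.assoc)
  qed
  then have "\<forall>k\<ge>1. omega f (N * k) ` F = F" by (auto simp: image_iff)
  then show ?thesis unfolding periodic_set_def using N by blast
qed

theorem mainTheorem1:
  fixes X :: "'a::metric_space set"
    and f :: "nat \<Rightarrow> 'a \<Rightarrow> 'a"
    and \<Psi> :: "'a set set"
    and C :: "'a set set"
    and \<Delta> :: "'a set topology"
  assumes X_compact: "compact X"
    and f_cont: "\<And>n. n \<ge> 1 \<Longrightarrow> continuous_on X (f n)"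
    and f_self: "\<And>n. n \<ge> 1 \<Longrightarrow> f n ` X \<subseteq> X"
    and Psi_hyper: "\<Psi> \<subseteq> {A. A \<subseteq> X \<and> A \<noteq> {} \<and> compact A}"
    and Psi_fin: "{A. A \<subseteq> X \<and> A \<noteq> {} \<and> finite A} \<subseteq> \<Psi>"
    and Psi_adm: "\<And>A k. A \<in> \<Psi> \<Longrightarrow> k \<ge> 1 \<Longrightarrow> omega f k ` A \<in> \<Psi>"
    and C_closed: "\<And>E. E \<in> C \<Longrightarrow> closedin (top_of_set X) E"
    and Delta_type: "\<Delta> = hit_miss_top X C \<or> \<Delta> = hit_far_miss_top X C"
    and Delta_adm: "continuous_map (top_of_set X) (subtopology \<Delta> \<Psi>) (\<lambda>x. {x})"
    and dense: "X \<subseteq> closure {x \<in> X. periodic_pt f x}"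
  shows "\<Psi> \<subseteq> (subtopology \<Delta> \<Psi>) closure_of {A \<in> \<Psi>. periodic_set f A}"
proof
  fix A assume A: "A \<in> \<Psi>"
  have AX: "A \<subseteq> X" "A \<noteq> {}" using A Psi_hyper by auto
  define S1 where "S1 = { {A. A \<inter> U \<noteq> {}} | U. openin (top_of_set X) U }"
  define S2 where "S2 = { {A. A \<subseteq> X - E} | E. E \<in> C }"
  define S3 where "S3 = { {A. \<exists>e>0. eps_nbhd X e A \<subseteq> X - E} | E. E \<in> C }"
  obtain S where S: "\<Delta> = topology_generated_by S" "S1 \<subseteq> S"
    "\<And>s. s \<in> S \<Longrightarrow> goodW X s"
  proof (cases "\<Delta> = hit_miss_top X C")
    case True
    show ?thesis
    proof (rule that[of "S1 \<union> S2"])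
      show "\<Delta> = topology_generated_by (S1 \<union> S2)" using True
        unfolding hit_miss_top_def S1_def S2_def by simp
      show "S1 \<subseteq> S1 \<union> S2" by simp
      fix s assume "s \<in> S1 \<union> S2"
      then show "goodW X s"
      proof
        assume "s \<in> S1"
        then obtain U where U: "s = {A. A \<inter> U \<noteq> {}}" "openin (top_of_set X) U"
          unfolding S1_def by blast
        show ?thesis unfolding goodW_def U(1)
          apply (intro allI impI, rule exI[of _ "{U}"], rule exI[of _ "{}"])
          using U(2) by auto
      next
        assume "s \<in> S2"
        then obtain E where E: "s = {A. A \<subseteq> X - E}" "E \<in> C"
          unfolding S2_def by blast
        show ?thesis unfolding goodW_def E(1)
          apply (intro allI impI, rule exI[of _ "{}"], rule exI[of _ "E"])
          using C_closed[OF E(2)] by auto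
      qed
    qed
  next
    case False
    then have F: "\<Delta> = hit_far_miss_top X C" using Delta_type by blast
    show ?thesis
    proof (rule that[of "S1 \<union> S3"])
      show "\<Delta> = topology_generated_by (S1 \<union> S3)" using F
        unfolding hit_far_miss_top_def S1_def S3_def by simp
      show "S1 \<subseteq> S1 \<union> S3" by simp
      fix s assume "s \<in> S1 \<union> S3"
      then show "goodW X s"
      proof
        assume "s \<in> S1"
        then obtain U where U: "s = {A. A \<inter> U \<noteq> {}}" "openin (top_of_set X) U"
          unfolding S1_def by blast
        show ?thesis unfolding goodW_def U(1)
          apply (intro allI impI, rule exI[of _ "{U}"], rule exI[of _ "{}"])
          using U(2) by auto
      next
        assume "s \<in> S3"
        then obtain E where E: "s = {A. \<exists>e>0. eps_nbhd X e A \<subseteq> X - E}" "E \<in> C"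
          unfolding S3_def by blast
        show ?thesis unfolding goodW_def E(1)
        proof (intro allI impI, rule exI[of _ "{}"], rule exI[of _ "E"], intro conjI)
          fix B assume B: "B \<subseteq> X \<and> B \<noteq> {} \<and> B \<in> {A. \<exists>e>0. eps_nbhd X e A \<subseteq> X - E}"
          then obtain e where "e > 0" "eps_nbhd X e B \<subseteq> X - E" by blast
          moreover have "B \<subseteq> eps_nbhd X e B" using B \<open>e > 0\<close> unfolding eps_nbhd_def by force
          ultimately show "B \<inter> E = {}" by blast
        next
          show "\<forall>F. finite F \<and> F \<noteq> {} \<and> F \<subseteq> X - E \<and> (\<forall>U\<in>{}. F \<inter> U \<noteq> {}) \<longrightarrow>
               F \<in> {A. \<exists>e>0. eps_nbhd X e A \<subseteq> X - E}"
            using finite_far C_closed[OF E(2)] by blast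
        qed (use C_closed[OF E(2)] in auto)
      qed
    qed
  qed
  have XS: "{A. A \<inter> X \<noteq> {}} \<in> S"
  proof -
    have "openin (top_of_set X) X" by simp
    then have "{A. A \<inter> X \<noteq> {}} \<in> S1" unfolding S1_def by blast
    then show ?thesis using S(2) by blast
  qed
  have "A \<in> {A. A \<inter> X \<noteq> {}}" using AX by auto
  then have "A \<in> \<Union>S" using XS by blast
  then have topA: "A \<in> topspace (subtopology \<Delta> \<Psi>)" using A S(1) by simp
  have perV: "\<exists>x\<in>V. periodic_pt f x" if V: "openin (top_of_set X) V" "V \<noteq> {}" for V
  proof -
    obtain G where G: "open G" "V = X \<inter> G" using V(1) by (auto simp: openin_open)
    obtain v where v: "v \<in> V" using V(2) by blast
    then have "v \<in> closure {x \<in> X. periodic_pt f x}" using dense G by auto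
    then obtain y where "y \<in> {x \<in> X. periodic_pt f x}" "y \<in> G"
    proof -
      have "G \<inter> closure {x \<in> X. periodic_pt f x} \<noteq> {}" using G v \<open>v \<in> closure _\<close> by blast
      then have "G \<inter> {x \<in> X. periodic_pt f x} \<noteq> {}" using open_Int_closure_eq_empty[OF G(1)] by blast
      then show ?thesis using that by blast
    qed
    then show ?thesis using G by auto
  qed
  show "A \<in> (subtopology \<Delta> \<Psi>) closure_of {A \<in> \<Psi>. periodic_set f A}"
    unfolding in_closure_of
  proof (intro conjI allI impI topA)
    fix T assume T: "A \<in> T \<and> openin (subtopology \<Delta> \<Psi>) T"
    then obtain T' where T': "openin \<Delta> T'" "T = T' \<inter> \<Psi>" by (auto simp: openin_subtopology)
    have "generate_topology_on S T'" using T'(1) unfolding S(1) by (rule openin_topology_generated_by)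
    then have "goodW X T'" using S(3) by (rule goodW_gen)
    then obtain H E where HE: "finite H" "\<forall>U\<in>H. openin (top_of_set X) U \<and> U \<inter> A \<noteq> {}"
        "closedin (top_of_set X) E" "A \<inter> E = {}"
        "\<forall>F. finite F \<and> F \<noteq> {} \<and> F \<subseteq> X - E \<and> (\<forall>U\<in>H. F \<inter> U \<noteq> {}) \<longrightarrow> F \<in> T'"
    proof -
      have AT: "A \<in> T'" using T T' by blast
      have ex: "\<exists>H E. finite H \<and> (\<forall>U\<in>H. openin (top_of_set X) U \<and> U \<inter> A \<noteq> {}) \<and>
        closedin (top_of_set X) E \<and> A \<inter> E = {} \<and>
        (\<forall>F. finite F \<and> F \<noteq> {} \<and> F \<subseteq> X - E \<and> (\<forall>U\<in>H. F \<inter> U \<noteq> {}) \<longrightarrow> F \<in> T')"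
        by (rule goodW_D[OF \<open>goodW X T'\<close> AX(1) AX(2) AT])
      show ?thesis
        apply (insert ex) apply (elim exE conjE) apply (rule that) apply assumption+ done
    qed
    have "\<forall>U\<in>insert X H. \<exists>x. x \<in> U - E \<and> periodic_pt f x"
    proof
      fix U assume U: "U \<in> insert X H"
      have "openin (top_of_set X) U \<and> U \<inter> A \<noteq> {}"
      proof (cases "U = X")
        case True then show ?thesis using AX by auto
      next
        case False then show ?thesis using U HE(2) by blast
      qed
      then have "openin (top_of_set X) (U - E)" "U - E \<noteq> {}"
        using HE(3,4) by (auto simp: openin_diff)
      then show "\<exists>x. x \<in> U - E \<and> periodic_pt f x" using perV by blast
    qed
    then obtain g where g: "\<forall>U\<in>insert X H. g U \<in> U - E \<and> periodic_pt f (g U)" by metis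
    define F where "F = g ` insert X H"
    have Ff: "finite F" "F \<noteq> {}" using HE(1) by (auto simp: F_def)
    have HX: "\<forall>U\<in>insert X H. U \<subseteq> X" using HE(2) by (auto dest: openin_imp_subset)
    have FX: "F \<subseteq> X - E"
    proof
      fix y assume "y \<in> F"
      then obtain U where U: "U \<in> insert X H" "y = g U" unfolding F_def by blast
      then show "y \<in> X - E" using g HX by blast
    qed
    have FH: "\<forall>U\<in>H. F \<inter> U \<noteq> {}"
    proof
      fix U assume U: "U \<in> H"
      then have "g U \<in> F" "g U \<in> U" using g unfolding F_def by auto
      then show "F \<inter> U \<noteq> {}" by blast
    qed
    have "F \<in> T'" using HE(5) Ff FX FH by blast
    moreover have "F \<in> \<Psi>" using Psi_fin Ff FX by auto
    moreover have "periodic_set f F"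
      by (rule periodic_finite[OF Ff(1)]) (use g in \<open>auto simp: F_def\<close>)
    ultimately show "\<exists>y. y \<in> {A \<in> \<Psi>. periodic_set f A} \<and> y \<in> T" using T' by blast
  qed
qed

end
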